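(* Let $k\ge d$. Let ${\mathbb S}=(\mathbf x_1,\dots,\mathbf x_{k-d})\sim D_{\mathcal X}^{k-d}$ and ${\mathbb S}_\circ=(\widetilde{\mathbf x}_1,\dots,\widetilde{\mathbf x}_d)\sim \mathrm{VS}_{D_{\mathcal X}}^d$ be independent, and let $\sigma$ be a uniformly random permutation of $\{1,\dots,k\}$, independent of both. Let $\widetilde{\mathbb S}\in(\mathbb R^d)^k$ be the $k$-tuple obtained by concatenating ${\mathbb S}$ and ${\mathbb S}_\circ$ and permuting the $k$ entries by $\sigma$. Then $\widetilde{\mathbb S}\sim \mathrm{VS}_{D_{\mathcal X}}^k$.
   Context: $D_{\mathcal X}$ is a probability distribution on $\mathbb R^d$ with $\mathbb E\|\mathbf x\|^2<\infty$ and $\boldsymbol\Sigma_{D_{\mathcal X}}:=\mathbb E[\mathbf x\mathbf x^\top]$ invertible. $D_{\mathcal X}^k$ denotes the law of $k$ i.i.d. draws from $D_{\mathcal X}$. For $k\ge d$, volume-rescaled sampling $\mathrm{VS}_{D_{\mathcal X}}^k$ is the probability measure on $(\mathbb R^d)^k$ defined for measurable $A\subseteq(\mathbb R^d)^k$ by $\mathrm{VS}_{D_{\mathcal X}}^k(A)=\dfrac{\mathbb E_{D_{\mathcal X}^k}\big[\mathbf 1_A\,\det\big(\sum_{i=1}^k\mathbf x_i\mathbf x_i^\top\big)\big]}{d!\binom{k}{d}\det(\boldsymbol\Sigma_{D_{\mathcal X}})}$. *)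

theory Defs
  imports "HOL-Probability.Probability"
begin

definition second_moment :: "(real^'d) measure \<Rightarrow> real^'d^'d" where
  "second_moment D = (\<chi> i j. integral\<^sup>L D (\<lambda>x. x$i * x$j))"

definition outer :: "real^'d \<Rightarrow> real^'d^'d" where
  "outer x = (\<chi> i j. x$i * x$j)"

definition iid :: "(real^'d) measure \<Rightarrow> nat \<Rightarrow> (nat \<Rightarrow> real^'d) measure" where
  "iid D k = PiM {..<k} (\<lambda>_. D)"

definition VS :: "(real^'d) measure \<Rightarrow> nat \<Rightarrow> (nat \<Rightarrow> real^'d) measure" where
  "VS D k = density (iid D k)
     (\<lambda>xs. ennreal (det (\<Sum>i<k. outer (xs i)) /
        (fact CARD('d) * real (k choose CARD('d)) * det (second_moment D))))"

definition unif_perm :: "nat \<Rightarrow> (nat \<Rightarrow> nat) measure" where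
  "unif_perm k = measure_pmf (pmf_of_set {\<sigma>. \<sigma> permutes {..<k}})"

text \<open>Concatenate S (length k-d) and S_o (length d), then permute entries by \<sigma>:
  the i-th entry of the result is the \<sigma>(i)-th entry of the concatenation.\<close>
definition concat_perm :: "nat \<Rightarrow> nat \<Rightarrow> (nat \<Rightarrow> real^'d) \<times> (nat \<Rightarrow> real^'d) \<times> (nat \<Rightarrow> nat)
    \<Rightarrow> (nat \<Rightarrow> real^'d)" where
  "concat_perm k m = (\<lambda>(S, So, \<sigma>).
     (\<lambda>i\<in>{..<k}. let j = \<sigma> i in if j < k - m then S j else So (j - (k - m))))"

end

theory Submission
  imports Defs
begin

definition FS :: "nat set \<Rightarrow> (nat \<Rightarrow> real^'d) \<Rightarrow> real^'d^'d" where
  "FS T w = (\<Sum>i\<in>T. outer (w i))"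

lemma FS_rows: "FS T w = (\<chi> r. \<Sum>i\<in>T. (w i $ r) *s w i)"
  by (simp add: FS_def outer_def vec_eq_iff sum_component)

definition gterm :: "(nat \<Rightarrow> real^'d) \<Rightarrow> ('d \<Rightarrow> nat) \<Rightarrow> real" where
  "gterm w f = (\<Prod>r\<in>UNIV. w (f r) $ r) * det (\<chi> r. w (f r))"

lemma det_rows_sum_gen:
  fixes a :: "'n::finite \<Rightarrow> 'b \<Rightarrow> real^'n"
  assumes fS: "finite S"
  shows "det (\<chi> i. \<Sum>j\<in>S. a i j) = (\<Sum>f\<in>PiE UNIV (\<lambda>_. S). det (\<chi> i. a i (f i)))"
proof -
  have "det (\<chi> i. \<Sum>j\<in>S. a i j) = (\<Sum>p\<in>{p. p permutes (UNIV::'n set)}. of_int (sign p) * (\<Prod>i\<in>UNIV. \<Sum>j\<in>S. a i j $ p i))"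
    by (simp add: det_def sum_component)
  also have "\<dots> = (\<Sum>p\<in>{p. p permutes (UNIV::'n set)}. of_int (sign p) * (\<Sum>f\<in>PiE UNIV (\<lambda>_. S). \<Prod>i\<in>UNIV. a i (f i) $ p i))"
    using fS by (simp add: prod_sum_PiE)
  also have "\<dots> = (\<Sum>f\<in>PiE UNIV (\<lambda>_. S). \<Sum>p\<in>{p. p permutes (UNIV::'n set)}. of_int (sign p) * (\<Prod>i\<in>UNIV. a i (f i) $ p i))"
    by (simp add: sum_distrib_left sum.swap[where A="{p. p permutes (UNIV::'n set)}"])
  also have "\<dots> = (\<Sum>f\<in>PiE UNIV (\<lambda>_. S). det (\<chi> i. a i (f i)))"
    by (simp add: det_def)
  finally show ?thesis .
qed

lemma PiE_UNIV_eq: "PiE (UNIV::'a set) (\<lambda>_. T) = {f. \<forall>r. f r \<in> T}"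
  by (auto simp: PiE_def Pi_def extensional_def)

lemma det_FS_expand:
  assumes "finite T"
  shows "det (FS T w) = (\<Sum>f\<in>{f. \<forall>r. f r \<in> T}. gterm w f)"
  unfolding FS_rows det_rows_sum_gen[OF assms] gterm_def PiE_UNIV_eq
  by (simp add: det_rows_mul)

lemma gterm_noninj: "\<not> inj (f::'d::finite \<Rightarrow> nat) \<Longrightarrow> gterm w f = 0"
proof -
  assume "\<not> inj f"
  then obtain r s where rs: "r \<noteq> s" "f r = f s" unfolding inj_def by blast
  have "det (\<chi> r. w (f r)) = 0"
    by (rule det_identical_rows[OF rs(1)]) (simp add: row_def rs(2) vec_eq_iff)
  thus ?thesis by (simp add: gterm_def)
qed

lemma finite_funs: "finite T \<Longrightarrow> finite {f::'d::finite \<Rightarrow> nat. \<forall>r. f r \<in> T}"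
proof -
  assume "finite T"
  hence "finite (PiE (UNIV::'d set) (\<lambda>_. T))" by (simp add: finite_PiE)
  moreover have "PiE (UNIV::'d set) (\<lambda>_. T) = {f. \<forall>r. f r \<in> T}"
    by (auto simp: PiE_def Pi_def extensional_def)
  ultimately show ?thesis by simp
qed

lemma det_FS_inj:
  assumes "finite T"
  shows "det (FS T (w::nat \<Rightarrow> real^'d)) = (\<Sum>f\<in>{f::'d\<Rightarrow>nat. (\<forall>r. f r \<in> T) \<and> inj f}. gterm w f)"
  unfolding det_FS_expand[OF assms]
  by (rule sum.mono_neutral_right) (auto simp: finite_funs assms intro: gterm_noninj)

lemma cauchy_binet:
  assumes K: "finite K"
  shows "(\<Sum>T\<in>{T. T \<subseteq> K \<and> card T = CARD('d)}. det (FS T (w::nat \<Rightarrow> real^'d))) = det (FS K w)"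
proof -
  let ?I = "\<lambda>T. {f::'d\<Rightarrow>nat. (\<forall>r. f r \<in> T) \<and> inj f}"
  let ?Sub = "{T. T \<subseteq> K \<and> card T = CARD('d)}"
  have fin: "finite (?I K)"
    by (rule finite_subset[OF _ finite_funs[OF K]]) auto
  have "(\<Sum>T\<in>?Sub. det (FS T w)) = (\<Sum>T\<in>?Sub. \<Sum>f\<in>{f\<in>?I K. range f = T}. gterm w f)"
  proof (rule sum.cong[OF refl])
    fix T assume T: "T \<in> ?Sub"
    hence fT: "finite T" using K finite_subset by blast
    have rng: "range f = T" if f: "\<forall>r. f r \<in> T" "inj f" for f :: "'d \<Rightarrow> nat"
    proof -
      have "card (range f) = CARD('d)" using f(2) by (simp add: card_image)
      moreover have "range f \<subseteq> T" using f by auto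
      ultimately show "range f = T" using T fT by (simp add: card_subset_eq)
    qed
    have eqI: "?I T = {f\<in>?I K. range f = T}"
      using T rng by auto
    thus "det (FS T w) = (\<Sum>f\<in>{f\<in>?I K. range f = T}. gterm w f)"
      using det_FS_inj[OF fT, of w] by (simp only: eqI)
  qed
  also have "\<dots> = (\<Sum>f\<in>?I K. gterm w f)"
  proof (rule sum.group[OF fin])
    show "finite ?Sub" using K by simp
    show "range ` ?I K \<subseteq> ?Sub" by (auto simp: card_image)
  qed
  finally show ?thesis by (simp add: det_FS_inj[OF K, of w])
qed

lemma det_FS_nonneg:
  assumes T: "finite T" "card T = CARD('d)"
  shows "det (FS T (w::nat \<Rightarrow> real^'d)) \<ge> 0"
proof -
  obtain e where e: "bij_betw e (UNIV::'d set) T"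
    using finite_same_card_bij[of "UNIV::'d set" T] T by auto
  define B :: "real^'d^'d" where "B = (\<chi> j c. w (e j) $ c)"
  have "FS T w = transpose B ** B"
  proof -
    have "\<And>r c. (\<Sum>i\<in>T. w i $ r * w i $ c) = (\<Sum>j\<in>UNIV. w (e j) $ r * w (e j) $ c)"
      using sum.reindex_bij_betw[OF e, of "\<lambda>i. w i $ r * w i $ c" for r c] by simp
    thus ?thesis
      by (simp add: FS_def outer_def vec_eq_iff sum_component B_def matrix_matrix_mult_def transpose_def)
  qed
  hence "det (FS T w) = det B * det B" by (simp add: det_mul)
  thus ?thesis by simp
qed

definition Tsig :: "nat \<Rightarrow> nat \<Rightarrow> (nat \<Rightarrow> nat) \<Rightarrow> nat set" where
  "Tsig k m \<sigma> = {i. i < k \<and> m \<le> \<sigma> i}"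

lemma exists_perm_image:
  assumes K: "finite K" and AB: "A \<subseteq> K" "B \<subseteq> K" "card A = card B"
  shows "\<exists>\<rho>. \<rho> permutes K \<and> \<rho> ` A = B"
proof -
  have fA: "finite A" "finite B" using K AB finite_subset by auto
  obtain h1 where h1: "bij_betw h1 A B" using finite_same_card_bij[OF fA] AB by auto
  have "card (K - A) = card (K - B)" using AB fA K by (simp add: card_Diff_subset)
  then obtain h2 where h2: "bij_betw h2 (K - A) (K - B)"
    using finite_same_card_bij[of "K - A" "K - B"] K by auto
  define \<rho> where "\<rho> x = (if x \<in> A then h1 x else if x \<in> K then h2 x else x)" for x
  have b1: "bij_betw \<rho> A B" using h1 by (rule bij_betw_cong[THEN iffD1, rotated]) (simp add: \<rho>_def)
  have b2: "bij_betw \<rho> (K - A) (K - B)" using h2 by (rule bij_betw_cong[THEN iffD1, rotated]) (simp add: \<rho>_def)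
  have "bij_betw \<rho> (A \<union> (K - A)) (B \<union> (K - B))"
    by (rule bij_betw_combine[OF b1 b2]) auto
  moreover have "A \<union> (K - A) = K" "B \<union> (K - B) = K" using AB by auto
  ultimately have "bij_betw \<rho> K K" by simp
  have "\<rho> permutes K"
  proof (rule bij_imp_permutes)
    show "bij_betw \<rho> K K" by fact
    fix x assume "x \<notin> K" thus "\<rho> x = x" using AB(1) by (auto simp: \<rho>_def)
  qed
  moreover have "\<rho> ` A = B" using b1 by (simp add: bij_betw_def)
  ultimately show ?thesis by blast
qed

lemma Tsig_card:
  assumes \<sigma>: "\<sigma> permutes {..<k}" and mk: "m \<le> k"
  shows "Tsig k m \<sigma> \<subseteq> {..<k}" "card (Tsig k m \<sigma>) = k - m"
proof -
  show "Tsig k m \<sigma> \<subseteq> {..<k}" by (auto simp: Tsig_def)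
  have "\<sigma> ` Tsig k m \<sigma> = {m..<k}"
  proof (rule equalityI)
    show "\<sigma> ` Tsig k m \<sigma> \<subseteq> {m..<k}"
    proof
      fix j assume "j \<in> \<sigma> ` Tsig k m \<sigma>"
      then obtain i where i: "i < k" "m \<le> \<sigma> i" "j = \<sigma> i" by (auto simp: Tsig_def)
      have "\<sigma> i \<in> {..<k}" using permutes_in_image[OF \<sigma>, of i] i(1) by simp
      thus "j \<in> {m..<k}" using i by simp
    qed
    show "{m..<k} \<subseteq> \<sigma> ` Tsig k m \<sigma>"
    proof
      fix j assume j: "j \<in> {m..<k}"
      have 1: "\<sigma> (inv \<sigma> j) = j" using permutes_inverses(1)[OF \<sigma>] by simp
      have "inv \<sigma> j \<in> {..<k}" using j permutes_in_image[OF permutes_inv[OF \<sigma>], of j] by simp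
      hence "inv \<sigma> j \<in> Tsig k m \<sigma>" using j 1 by (simp add: Tsig_def)
      thus "j \<in> \<sigma> ` Tsig k m \<sigma>" using 1 by (metis image_eqI)
    qed
  qed
  moreover have "inj_on \<sigma> (Tsig k m \<sigma>)" using permutes_inj[OF \<sigma>] by (rule inj_on_subset) simp
  ultimately have "card (Tsig k m \<sigma>) = card {m..<k}" using card_image by metis
  thus "card (Tsig k m \<sigma>) = k - m" by simp
qed

lemma card_le_perm:
  assumes \<rho>: "\<rho> permutes {..<k}" and T1: "T1 \<subseteq> {..<k}" and T2: "\<rho> ` T1 = T2"
  shows "card {\<sigma>. \<sigma> permutes {..<k} \<and> Tsig k m \<sigma> = T2} \<le> card {\<sigma>. \<sigma> permutes {..<k} \<and> Tsig k m \<sigma> = T1}"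
proof (rule card_inj_on_le)
  show "finite {\<sigma>. \<sigma> permutes {..<k} \<and> Tsig k m \<sigma> = T1}"
    by (rule finite_subset[OF _ finite_permutations[of "{..<k}"]]) auto
  show "inj_on (\<lambda>\<sigma>. \<sigma> \<circ> \<rho>) {\<sigma>. \<sigma> permutes {..<k} \<and> Tsig k m \<sigma> = T2}"
  proof (rule inj_onI)
    fix \<sigma> \<tau> assume "\<sigma> \<circ> \<rho> = \<tau> \<circ> \<rho>"
    hence "\<sigma> \<circ> \<rho> \<circ> inv \<rho> = \<tau> \<circ> \<rho> \<circ> inv \<rho>" by simp
    thus "\<sigma> = \<tau>" using permutes_inv_o(1)[OF \<rho>] by (simp add: o_assoc[symmetric])
  qed
  show "(\<lambda>\<sigma>. \<sigma> \<circ> \<rho>) ` {\<sigma>. \<sigma> permutes {..<k} \<and> Tsig k m \<sigma> = T2} \<subseteq> {\<sigma>. \<sigma> permutes {..<k} \<and> Tsig k m \<sigma> = T1}"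
  proof (rule subsetI)
    fix \<tau> assume "\<tau> \<in> (\<lambda>\<sigma>. \<sigma> \<circ> \<rho>) ` {\<sigma>. \<sigma> permutes {..<k} \<and> Tsig k m \<sigma> = T2}"
    then obtain \<sigma> where \<sigma>: "\<sigma> permutes {..<k}" and eq: "Tsig k m \<sigma> = T2" and \<tau>: "\<tau> = \<sigma> \<circ> \<rho>" by blast
    show "\<tau> \<in> {\<sigma>. \<sigma> permutes {..<k} \<and> Tsig k m \<sigma> = T1}"
      unfolding \<tau> mem_Collect_eq
    proof
      show "\<sigma> \<circ> \<rho> permutes {..<k}" by (rule permutes_compose[OF \<rho> \<sigma>])
      have "Tsig k m (\<sigma> \<circ> \<rho>) = {i. i < k \<and> \<rho> i \<in> T2}"
        using eq permutes_in_image[OF \<rho>] by (auto simp: Tsig_def)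
      also have "\<dots> = T1"
        using T1 T2 permutes_inj[OF \<rho>] by (auto simp: inj_def)
      finally show "Tsig k m (\<sigma> \<circ> \<rho>) = T1" .
    qed
  qed
qed

lemma sum_perm_det:
  assumes dk: "CARD('d) \<le> k"
  shows "(\<Sum>\<sigma>\<in>{\<sigma>. \<sigma> permutes {..<k}}. det (FS (Tsig k (k - CARD('d)) \<sigma>) (w::nat \<Rightarrow> real^'d)))
     = fact k / real (k choose CARD('d)) * det (FS {..<k} w)"
proof -
  let ?d = "CARD('d)" let ?m = "k - CARD('d)"
  let ?P = "{\<sigma>. \<sigma> permutes {..<k}}"
  let ?Sub = "{T. T \<subseteq> {..<k} \<and> card T = ?d}"
  let ?c = "\<lambda>T. card {\<sigma>\<in>?P. Tsig k ?m \<sigma> = T}"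
  let ?M = "{?m..<k}"
  have finP: "finite ?P" by (rule finite_permutations) simp
  have img: "Tsig k ?m ` ?P \<subseteq> ?Sub"
  proof clarify
    fix \<sigma> assume \<sigma>: "\<sigma> permutes {..<k}"
    show "Tsig k ?m \<sigma> \<subseteq> {..<k} \<and> card (Tsig k ?m \<sigma>) = ?d"
      using Tsig_card[OF \<sigma>, of ?m] dk by simp
  qed
  have M: "?M \<in> ?Sub" using dk by auto
  have cconst: "?c T = ?c ?M" if T: "T \<in> ?Sub" for T
  proof -
    obtain \<rho> where \<rho>: "\<rho> permutes {..<k}" "\<rho> ` ?M = T"
      using exists_perm_image[of "{..<k}" ?M T] T M by auto
    have \<rho>'1: "inv \<rho> permutes {..<k}" using permutes_inv[OF \<rho>(1)] .
    have "inv \<rho> ` T = (inv \<rho> \<circ> \<rho>) ` ?M" by (simp add: \<rho>(2)[symmetric] image_comp)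
    hence \<rho>'2: "inv \<rho> ` T = ?M" by (simp only: permutes_inv_o(2)[OF \<rho>(1)] image_id id_apply)
    have Msub: "?M \<subseteq> {..<k}" by (auto simp: subset_eq)
    have Tsub: "T \<subseteq> {..<k}" using T by simp
    have "?c T \<le> ?c ?M" using card_le_perm[OF \<rho>(1) Msub \<rho>(2), of ?m] by simp
    moreover have "?c ?M \<le> ?c T" using card_le_perm[OF \<rho>'1 Tsub \<rho>'2, of ?m] by simp
    ultimately show ?thesis by simp
  qed
  have "fact k = card ?P" using card_permutations[of "{..<k}"] by simp
  also have "card ?P = (\<Sum>\<sigma>\<in>?P. (1::nat))" by simp
  also have "\<dots> = (\<Sum>T\<in>?Sub. \<Sum>\<sigma>\<in>{\<sigma>\<in>?P. Tsig k ?m \<sigma> = T}. 1)"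
    by (rule sum.group[symmetric, OF finP _ img]) simp
  also have "\<dots> = (\<Sum>T\<in>?Sub. ?c ?M)" using cconst by (intro sum.cong) auto
  also have "\<dots> = (k choose ?d) * ?c ?M" using n_subsets[of "{..<k}" ?d] by simp
  finally have cfact: "fact k = (k choose ?d) * ?c ?M" .
  have "(\<Sum>\<sigma>\<in>?P. det (FS (Tsig k ?m \<sigma>) w)) = (\<Sum>T\<in>?Sub. \<Sum>\<sigma>\<in>{\<sigma>\<in>?P. Tsig k ?m \<sigma> = T}. det (FS (Tsig k ?m \<sigma>) w))"
    by (rule sum.group[symmetric, OF finP _ img]) simp
  also have "\<dots> = (\<Sum>T\<in>?Sub. real (?c ?M) * det (FS T w))"
  proof (intro sum.cong refl)
    fix T assume T: "T \<in> ?Sub"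
    have "(\<Sum>\<sigma>\<in>{\<sigma>\<in>?P. Tsig k ?m \<sigma> = T}. det (FS (Tsig k ?m \<sigma>) w)) = (\<Sum>\<sigma>\<in>{\<sigma>\<in>?P. Tsig k ?m \<sigma> = T}. det (FS T w))"
      by (rule sum.cong) auto
    thus "(\<Sum>\<sigma>\<in>{\<sigma>\<in>?P. Tsig k ?m \<sigma> = T}. det (FS (Tsig k ?m \<sigma>) w)) = real (?c ?M) * det (FS T w)"
      using cconst[OF T] by simp
  qed
  also have "\<dots> = real (?c ?M) * det (FS {..<k} w)"
    by (simp add: sum_distrib_left[symmetric] cauchy_binet)
  also have "real (?c ?M) = fact k / real (k choose ?d)"
  proof -
    have "real (k choose ?d) > 0" using dk by simp
    moreover have "(fact k :: real) = real (k choose ?d) * real (?c ?M)"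
      using arg_cong[OF cfact, of real] by (simp add: of_nat_fact)
    ultimately show ?thesis by (simp add: field_simps)
  qed
  finally show ?thesis .
qed

lemma concat_perm_eq:
  "concat_perm k n (S, So, \<sigma>) = (\<lambda>i\<in>{..<k}. if \<sigma> i < k - n then S (\<sigma> i) else So (\<sigma> i - (k - n)))"
  by (simp add: concat_perm_def Let_def)

lemma meas_concat:
  fixes s t :: "'m \<Rightarrow> nat \<Rightarrow> real^'d"
  assumes s: "s \<in> measurable M (PiM {..<k - n} (\<lambda>_. borel))"
    and t: "t \<in> measurable M (PiM {..<n} (\<lambda>_. borel))"
    and g: "g \<in> measurable M (count_space UNIV)"
  shows "(\<lambda>x. concat_perm k n (s x, t x, g x)) \<in> measurable M (PiM {..<k} (\<lambda>_. borel))"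
proof -
  define G where "G j x = (if j < k - n then s x j else if j - (k - n) < n then t x (j - (k - n)) else undefined)" for j x
  have eq: "concat_perm k n (s x, t x, g x) = (\<lambda>i\<in>{..<k}. G (g x i) x)" if x: "x \<in> space M" for x
  proof -
    have "t x \<in> space (PiM {..<n} (\<lambda>_. borel::(real^'d) measure))" using measurable_space[OF t x] .
    hence ext: "\<And>j. j \<notin> {..<n} \<Longrightarrow> t x j = undefined" by (auto simp: space_PiM PiE_def extensional_def)
    show ?thesis unfolding concat_perm_eq G_def using ext by (auto simp: fun_eq_iff)
  qed
  have "(\<lambda>x. \<lambda>i\<in>{..<k}. G (g x i) x) \<in> measurable M (PiM {..<k} (\<lambda>_. borel))"
  proof (rule measurable_restrict)
    fix i assume "i \<in> {..<k}"
    show "(\<lambda>x. G (g x i) x) \<in> measurable M borel"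
    proof (rule measurable_compose_countable[where f=G])
      fix j :: nat
      show "G j \<in> measurable M borel"
      proof (cases "j < k - n")
        case True
        have "(\<lambda>x. s x j) \<in> measurable M borel"
          by (rule measurable_compose[OF s measurable_component_singleton]) (use True in simp)
        thus ?thesis using True by (simp add: G_def[abs_def])
      next
        case False
        show ?thesis
        proof (cases "j - (k - n) < n")
          case True
          have "(\<lambda>x. t x (j - (k - n))) \<in> measurable M borel"
            by (rule measurable_compose[OF t measurable_component_singleton]) (use True in simp)
          thus ?thesis using True False by (simp add: G_def[abs_def])
        next
          case False2: False
          thus ?thesis using False by (simp add: G_def[abs_def])
        qed
      qed
    next
      show "(\<lambda>x. g x i) \<in> measurable M (count_space UNIV)"
        by (rule measurable_compose[OF g]) simp
    qed
  qed
  thus ?thesis by (rule measurable_cong[THEN iffD2, rotated]) (simp add: eq)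
qed

lemma sets_iid:
  assumes "sets D = sets borel"
  shows "sets (iid D n) = sets (PiM {..<n} (\<lambda>_. borel))"
  unfolding iid_def by (rule sets_PiM_cong) (auto simp: assms)

lemma space_D: "sets D = sets borel \<Longrightarrow> space D = UNIV"
  using sets_eq_imp_space_eq by fastforce

lemma distr_Psi:
  fixes D :: "(real^'d) measure"
  assumes D: "prob_space D" "sets D = sets borel" and nk: "n \<le> k" and \<sigma>: "\<sigma> permutes {..<k}"
  shows "distr (iid D (k - n) \<Otimes>\<^sub>M iid D n) (iid D k) (\<lambda>z. concat_perm k n (fst z, snd z, \<sigma>)) = iid D k"
proof -
  let ?m = "k - n"
  let ?Psi = "\<lambda>z. concat_perm k n (fst z, snd z, \<sigma>)"
  interpret PS: product_sigma_finite "\<lambda>_::nat. D"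
    by (simp add: product_sigma_finite_def prob_space_imp_sigma_finite D)
  interpret Dn: sigma_finite_measure "iid D n"
    unfolding iid_def by (rule prob_space_imp_sigma_finite, rule prob_space_PiM) (simp add: D)
  have sI: "\<And>n. sets (iid D n) = sets (PiM {..<n} (\<lambda>_. borel))" using sets_iid[OF D(2)] .
  have mPsi: "?Psi \<in> measurable (iid D ?m \<Otimes>\<^sub>M iid D n) (iid D k)"
    unfolding measurable_cong_sets[OF refl sI[of k]]
  proof (rule meas_concat)
    show "fst \<in> measurable (iid D (k - n) \<Otimes>\<^sub>M iid D n) (PiM {..<k - n} (\<lambda>_. borel))"
      using measurable_fst[of "iid D (k - n)" "iid D n"] by (simp only: measurable_cong_sets[OF refl sI[of "k - n"]])
    show "snd \<in> measurable (iid D (k - n) \<Otimes>\<^sub>M iid D n) (PiM {..<n} (\<lambda>_. borel))"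
      using measurable_snd[of "iid D (k - n)" "iid D n"] by (simp only: measurable_cong_sets[OF refl sI[of n]])
  qed simp
  have s1: "\<sigma> (inv \<sigma> j) = j" for j using permutes_inverses(1)[OF \<sigma>] .
  have s2: "inv \<sigma> (\<sigma> i) = i" for i using permutes_inverses(2)[OF \<sigma>] .
  have s3: "\<sigma> i < k \<longleftrightarrow> i < k" for i using permutes_in_image[OF \<sigma>, of i] by simp
  have s4: "inv \<sigma> j < k \<longleftrightarrow> j < k" for j using permutes_in_image[OF permutes_inv[OF \<sigma>], of j] by simp
  show ?thesis unfolding iid_def[of D k]
  proof (rule PS.PiM_eqI)
    show "sets (distr (iid D (k - n) \<Otimes>\<^sub>M iid D n) (PiM {..<k} (\<lambda>_. D)) ?Psi) = sets (PiM {..<k} (\<lambda>_. D))"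
      by simp
    fix A assume A: "\<And>i. i \<in> {..<k} \<Longrightarrow> A i \<in> sets D"
    have AS: "PiE {..<k} A \<in> sets (PiM {..<k} (\<lambda>_. D))" using A by (intro sets_PiM_I_finite) auto
    have pre: "?Psi -` PiE {..<k} A \<inter> space (iid D ?m \<Otimes>\<^sub>M iid D n)
        = PiE {..<?m} (\<lambda>j. A (inv \<sigma> j)) \<times> PiE {..<n} (\<lambda>j. A (inv \<sigma> (j + ?m)))"
    proof (intro set_eqI iffI)
      fix z assume z: "z \<in> ?Psi -` PiE {..<k} A \<inter> space (iid D ?m \<Otimes>\<^sub>M iid D n)"
      obtain S So where zz: "z = (S, So)" by force
      have sp: "S \<in> PiE {..<?m} (\<lambda>_. UNIV)" "So \<in> PiE {..<n} (\<lambda>_. UNIV)"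
        using z by (auto simp: zz space_pair_measure iid_def space_PiM space_D[OF D(2)])
      have mem: "\<And>i. i < k \<Longrightarrow> (if \<sigma> i < ?m then S (\<sigma> i) else So (\<sigma> i - ?m)) \<in> A i"
        using z by (auto simp: zz concat_perm_eq PiE_def Pi_def)
      have "S \<in> PiE {..<?m} (\<lambda>j. A (inv \<sigma> j))"
      proof -
        have "S j \<in> A (inv \<sigma> j)" if j: "j < ?m" for j
          using mem[of "inv \<sigma> j"] j s1[of j] s4[of j] by auto
        thus ?thesis using sp(1) by (auto simp: PiE_def Pi_def extensional_def)
      qed
      moreover have "So \<in> PiE {..<n} (\<lambda>j. A (inv \<sigma> (j + ?m)))"
      proof -
        have "So j \<in> A (inv \<sigma> (j + ?m))" if j: "j < n" for j
        proof -
          have jj: "j + ?m < k" "\<not> (j + ?m < ?m)" using j nk by auto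
          have "inv \<sigma> (j + ?m) < k" using s4 jj by simp
          from mem[OF this] show ?thesis by (simp only: s1 jj(2) if_False diff_add_inverse2)
        qed
        thus ?thesis using sp(2) by (auto simp: PiE_def Pi_def extensional_def)
      qed
      ultimately show "z \<in> PiE {..<?m} (\<lambda>j. A (inv \<sigma> j)) \<times> PiE {..<n} (\<lambda>j. A (inv \<sigma> (j + ?m)))"
        by (simp add: zz)
    next
      fix z assume z: "z \<in> PiE {..<?m} (\<lambda>j. A (inv \<sigma> j)) \<times> PiE {..<n} (\<lambda>j. A (inv \<sigma> (j + ?m)))"
      obtain S So where zz: "z = (S, So)" by force
      have S: "\<And>j. j < ?m \<Longrightarrow> S j \<in> A (inv \<sigma> j)" and So: "\<And>j. j < n \<Longrightarrow> So j \<in> A (inv \<sigma> (j + ?m))"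
        using z by (auto simp: zz)
      have "(if \<sigma> i < ?m then S (\<sigma> i) else So (\<sigma> i - ?m)) \<in> A i" if i: "i < k" for i
      proof (cases "\<sigma> i < ?m")
        case True thus ?thesis using S[of "\<sigma> i"] s2 by simp
      next
        case False
        have "\<sigma> i - ?m < n" using s3[of i] i nk False by simp
        moreover have "\<sigma> i - ?m + ?m = \<sigma> i" using False by simp
        ultimately show ?thesis using So[of "\<sigma> i - ?m"] False s2 by simp
      qed
      hence "?Psi z \<in> PiE {..<k} A" by (simp add: zz concat_perm_eq)
      moreover have "z \<in> space (iid D ?m \<Otimes>\<^sub>M iid D n)"
        using z by (auto simp: zz space_pair_measure iid_def space_PiM space_D[OF D(2)] PiE_def Pi_def)
      ultimately show "z \<in> ?Psi -` PiE {..<k} A \<inter> space (iid D ?m \<Otimes>\<^sub>M iid D n)" by simp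
    qed
    have mA1: "PiE {..<?m} (\<lambda>j. A (inv \<sigma> j)) \<in> sets (iid D ?m)"
      unfolding iid_def using A s4 by (intro sets_PiM_I_finite) auto
    have mA2: "PiE {..<n} (\<lambda>j. A (inv \<sigma> (j + ?m))) \<in> sets (iid D n)"
      unfolding iid_def using A s4 nk by (intro sets_PiM_I_finite) auto
    have "emeasure (distr (iid D ?m \<Otimes>\<^sub>M iid D n) (PiM {..<k} (\<lambda>_. D)) ?Psi) (PiE {..<k} A)
        = emeasure (iid D ?m \<Otimes>\<^sub>M iid D n) (?Psi -` PiE {..<k} A \<inter> space (iid D ?m \<Otimes>\<^sub>M iid D n))"
      using mPsi AS unfolding iid_def[of D k] by (rule emeasure_distr)
    also have "\<dots> = emeasure (iid D ?m) (PiE {..<?m} (\<lambda>j. A (inv \<sigma> j))) * emeasure (iid D n) (PiE {..<n} (\<lambda>j. A (inv \<sigma> (j + ?m))))"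
      unfolding pre by (rule Dn.emeasure_pair_measure_Times[OF mA1 mA2])
    also have "\<dots> = (\<Prod>j\<in>{..<?m}. emeasure D (A (inv \<sigma> j))) * (\<Prod>j\<in>{..<n}. emeasure D (A (inv \<sigma> (j + ?m))))"
      unfolding iid_def using A s4 nk by (subst PS.emeasure_PiM, simp, simp)+ simp
    also have "(\<Prod>j\<in>{..<n}. emeasure D (A (inv \<sigma> (j + ?m)))) = (\<Prod>j\<in>{?m..<k}. emeasure D (A (inv \<sigma> j)))"
      using prod.shift_bounds_nat_ivl[of "\<lambda>j. emeasure D (A (inv \<sigma> j))" 0 ?m n] nk
      by (simp add: lessThan_atLeast0)
    also have "(\<Prod>j\<in>{..<?m}. emeasure D (A (inv \<sigma> j))) * \<dots> = (\<Prod>j\<in>{..<k}. emeasure D (A (inv \<sigma> j)))"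
      using prod.atLeastLessThan_concat[of 0 ?m k "\<lambda>j. emeasure D (A (inv \<sigma> j))"]
      by (simp add: lessThan_atLeast0)
    also have "\<dots> = (\<Prod>i\<in>{..<k}. emeasure D (A i))"
      using prod.permute[OF \<sigma>, of "\<lambda>j. emeasure D (A (inv \<sigma> j))"] by (simp add: o_def s2)
    finally show "emeasure (distr (iid D ?m \<Otimes>\<^sub>M iid D n) (PiM {..<k} (\<lambda>_. D)) ?Psi) (PiE {..<k} A)
        = (\<Prod>i\<in>{..<k}. emeasure D (A i))" .
  qed simp
qed

lemma meas_vecnth: "(\<lambda>x::real^'d. x $ r) \<in> borel_measurable borel"
  by (intro borel_measurable_continuous_onI continuous_on_component continuous_on_id)

lemma meas_comp_nth:
  assumes "i \<in> I"
  shows "(\<lambda>w. w i $ r) \<in> borel_measurable (PiM I (\<lambda>_. borel :: (real^'d) measure))"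
  by (rule measurable_compose[OF measurable_component_singleton[OF assms] meas_vecnth])

lemma meas_detFS:
  assumes "T \<subseteq> I"
  shows "(\<lambda>w. det (FS T w)) \<in> borel_measurable (PiM I (\<lambda>_. borel :: (real^'d) measure))"
proof -
  have eq: "det (FS T w) = (\<Sum>p\<in>{p. p permutes (UNIV::'d set)}. of_int (sign p) * (\<Prod>r\<in>UNIV. \<Sum>i\<in>T. w i $ r * w i $ p r))" for w
    by (simp add: det_def FS_def outer_def sum_component)
  show ?thesis unfolding eq
    by (intro borel_measurable_sum borel_measurable_prod borel_measurable_times borel_measurable_const
        meas_comp_nth) (use assms in auto)
qed

lemma FS_concat:
  assumes \<sigma>: "\<sigma> permutes {..<k}" and nk: "n \<le> k"
  shows "FS (Tsig k (k - n) \<sigma>) (concat_perm k n (S, So, \<sigma>)) = (\<Sum>i<n. outer (So i))"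
proof -
  let ?m = "k - n"
  have s1: "\<sigma> (inv \<sigma> j) = j" for j using permutes_inverses(1)[OF \<sigma>] .
  have s2: "inv \<sigma> (\<sigma> i) = i" for i using permutes_inverses(2)[OF \<sigma>] .
  have s3: "\<sigma> i < k \<longleftrightarrow> i < k" for i using permutes_in_image[OF \<sigma>, of i] by simp
  have s4: "inv \<sigma> j < k \<longleftrightarrow> j < k" for j using permutes_in_image[OF permutes_inv[OF \<sigma>], of j] by simp
  have "FS (Tsig k ?m \<sigma>) (concat_perm k n (S, So, \<sigma>)) = (\<Sum>i\<in>Tsig k ?m \<sigma>. outer (So (\<sigma> i - ?m)))"
    unfolding FS_def by (rule sum.cong) (auto simp: Tsig_def concat_perm_eq)
  also have "\<dots> = (\<Sum>j<n. outer (So j))"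
  proof (rule sum.reindex_bij_witness[where i="\<lambda>j. inv \<sigma> (j + ?m)" and j="\<lambda>i. \<sigma> i - ?m"])
    fix i assume i: "i \<in> Tsig k ?m \<sigma>"
    hence "?m \<le> \<sigma> i" "i < k" by (auto simp: Tsig_def)
    thus "inv \<sigma> (\<sigma> i - ?m + ?m) = i" by (simp add: s2)
    show "\<sigma> i - ?m \<in> {..<n}" using \<open>i < k\<close> s3[of i] \<open>?m \<le> \<sigma> i\<close> nk by auto
    show "outer (So (\<sigma> i - ?m)) = outer (So (\<sigma> i - ?m))" ..
  next
    fix j assume j: "j \<in> {..<n}"
    thus "\<sigma> (inv \<sigma> (j + ?m)) - ?m = j" by (simp add: s1)
    show "inv \<sigma> (j + ?m) \<in> Tsig k ?m \<sigma>" using j nk s4[of "j + ?m"] by (auto simp: Tsig_def s1)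
  qed
  finally show ?thesis .
qed

lemma ennreal_sum_div:
  assumes "\<And>i. i \<in> I \<Longrightarrow> 0 \<le> a i"
  shows "(\<Sum>i\<in>I. ennreal (a i / c)) = ennreal ((\<Sum>i\<in>I. a i) / c)"
proof (cases "c > 0")
  case True
  thus ?thesis using assms by (simp add: sum_divide_distrib)
next
  case False
  hence "a i / c \<le> 0" if "i \<in> I" for i using assms[OF that] by (simp add: divide_nonneg_nonpos)
  moreover have "(\<Sum>i\<in>I. a i) / c \<le> 0" using False assms by (simp add: divide_nonneg_nonpos sum_nonneg)
  ultimately show ?thesis by (simp add: ennreal_neg)
qed

lemma ennreal_div_pos:
  assumes "q > 0"
  shows "ennreal x / ennreal q = ennreal (x / q)"
proof (cases "x \<ge> 0")
  case True thus ?thesis using divide_ennreal[OF True assms] by simp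
next
  case False
  hence "x / q \<le> 0" using assms by (simp add: divide_nonpos_pos)
  thus ?thesis using False by (simp add: ennreal_neg)
qed

theorem theorem1:
  fixes D :: "(real^'d) measure" and k :: nat
  assumes "prob_space D"
    and "sets D = sets borel"
    and "integrable D (\<lambda>x. norm x ^ 2)"
    and "invertible (second_moment D)"
    and "k \<ge> CARD('d)"
  shows "distr (iid D (k - CARD('d)) \<Otimes>\<^sub>M (VS D CARD('d) \<Otimes>\<^sub>M unif_perm k))
            (PiM {..<k} (\<lambda>_. borel)) (concat_perm k CARD('d))
         = VS D k"
proof -
  note D = assms(1,2) and dk = assms(5)
  define d where "d = CARD('d)"
  define m where "m = k - d"
  define c where "c = fact d * real (d choose d) * det (second_moment D)"
  define ck where "ck = fact d * real (k choose d) * det (second_moment D)"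
  define hd where "hd (So :: nat \<Rightarrow> real^'d) = ennreal (det (FS {..<d} So) / c)" for So
  define hk where "hk (w :: nat \<Rightarrow> real^'d) = ennreal (det (FS {..<k} w) / ck)" for w
  define H where "H \<sigma> (w :: nat \<Rightarrow> real^'d) = ennreal (det (FS (Tsig k m \<sigma>) w) / c)" for \<sigma> w
  define Pm where "Pm = {\<sigma>. \<sigma> permutes {..<k}}"
  define U where "U = unif_perm k"
  define Q where "Q = VS D d \<Otimes>\<^sub>M U"
  define P where "P = iid D m \<Otimes>\<^sub>M Q"
  define N where "N = (PiM {..<k} (\<lambda>_. borel) :: (nat \<Rightarrow> real^'d) measure)"
  define \<Phi> where "\<Phi> = (concat_perm k d :: _ \<Rightarrow> nat \<Rightarrow> real^'d)"
  define K where "K = (of_nat (card Pm) :: ennreal)"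
  have dk': "d \<le> k" using dk by (simp add: d_def)
  have finPm: "finite Pm" unfolding Pm_def by (rule finite_permutations) simp
  have nePm: "Pm \<noteq> {}" unfolding Pm_def using permutes_id by blast
  have cardPm: "card Pm = fact k" unfolding Pm_def using card_permutations[of "{..<k}"] by simp
  have VSd: "VS D d = density (iid D d) hd"
    unfolding hd_def[abs_def] by (simp add: VS_def hd_def FS_def c_def d_def)
  have VSk: "VS D k = density (iid D k) hk"
    unfolding hk_def[abs_def] by (simp add: VS_def hk_def FS_def ck_def d_def)
  have U_eq: "U = measure_pmf (pmf_of_set Pm)" by (simp add: U_def unif_perm_def Pm_def)
  have sI: "\<And>n. sets (iid D n) = sets (PiM {..<n} (\<lambda>_. borel))" using sets_iid[OF D(2)] .
  have spI: "\<And>n. space (iid D n) = space (PiM {..<n} (\<lambda>_. borel::(real^'d) measure))"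
    using sI by (rule sets_eq_imp_space_eq)
  have probI: "\<And>n. prob_space (iid D n)"
    unfolding iid_def by (rule prob_space_PiM) (simp add: D)
  have sfI: "\<And>n. sigma_finite_measure (iid D n)" using probI by (rule prob_space_imp_sigma_finite)
  have mhd: "hd \<in> borel_measurable (iid D d)"
    unfolding hd_def measurable_cong_sets[OF sI refl]
    by (intro measurable_compose[OF _ measurable_ennreal] borel_measurable_divide
        borel_measurable_const meas_detFS) simp
  have mhk: "hk \<in> borel_measurable (iid D k)"
    unfolding hk_def measurable_cong_sets[OF sI refl]
    by (intro measurable_compose[OF _ measurable_ennreal] borel_measurable_divide
        borel_measurable_const meas_detFS) simp
  have mH: "H \<sigma> \<in> borel_measurable (iid D k)" for \<sigma>
    unfolding H_def measurable_cong_sets[OF sI refl]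
    by (intro measurable_compose[OF _ measurable_ennreal] borel_measurable_divide
        borel_measurable_const meas_detFS) (auto simp: Tsig_def)
  have sfV: "sigma_finite_measure (VS D d)"
    unfolding VSd using sigma_finite_measure.sigma_finite_iff_density_finite[OF sfI mhd] by (simp add: hd_def)
  have probU: "prob_space U" unfolding U_eq by (rule prob_space_measure_pmf)
  interpret U: sigma_finite_measure U using probU by (rule prob_space_imp_sigma_finite)
  interpret Q: sigma_finite_measure Q unfolding Q_def
    by (rule sigma_finite_pair_measure[OF sfV]) (rule U.sigma_finite_measure_axioms)
  interpret Dd: sigma_finite_measure "iid D d" by (rule sfI)
  have sV: "sets (VS D d) = sets (iid D d)" by (simp add: VS_def)
  have mU: "\<And>M. measurable M U = measurable M (count_space UNIV)" by (simp add: U_eq)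
  have mPhi: "\<Phi> \<in> measurable P N"
  proof -
    have "(\<lambda>x. concat_perm k d (fst x, fst (snd x), snd (snd x))) \<in> measurable P N"
      unfolding N_def
    proof (rule meas_concat)
      show "fst \<in> measurable P (PiM {..<k - d} (\<lambda>_. borel))"
        using measurable_fst[of "iid D m" Q] unfolding P_def m_def
        by (simp only: measurable_cong_sets[OF refl sI[of "k - d"]])
      have "(\<lambda>x. fst (snd x)) \<in> measurable P (VS D d)"
        unfolding P_def Q_def by (rule measurable_compose[OF measurable_snd measurable_fst])
      thus "(\<lambda>x. fst (snd x)) \<in> measurable P (PiM {..<d} (\<lambda>_. borel))"
        by (simp only: measurable_cong_sets[OF refl sV] measurable_cong_sets[OF refl sI[of d]])
      have "(\<lambda>x. snd (snd x)) \<in> measurable P U"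
        unfolding P_def Q_def by (rule measurable_compose[OF measurable_snd measurable_snd])
      thus "(\<lambda>x. snd (snd x)) \<in> measurable P (count_space UNIV)" by (simp only: mU)
    qed
    thus ?thesis by (simp add: \<Phi>_def)
  qed
  have mfix: "(\<lambda>So. (S, So, \<sigma>)) \<in> measurable (iid D d) P" if S: "S \<in> space (iid D m)" for S \<sigma>
    unfolding P_def Q_def
  proof (intro measurable_Pair measurable_const[OF S])
    show "(\<lambda>x. x) \<in> measurable (iid D d) (VS D d)" by (rule measurable_ident_sets) (simp add: sV)
    show "(\<lambda>x. \<sigma>) \<in> measurable (iid D d) U" by (simp add: mU)
  qed
  have mpair: "(\<lambda>z. (fst z, snd z, \<sigma>)) \<in> measurable (iid D m \<Otimes>\<^sub>M iid D d) P" for \<sigma>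
  proof -
    have sndV: "snd \<in> measurable (iid D m \<Otimes>\<^sub>M iid D d) (VS D d)"
      using measurable_snd[of "iid D m" "iid D d"] by (simp only: measurable_cong_sets[OF refl sV])
    have cU: "(\<lambda>x. \<sigma>) \<in> measurable (iid D m \<Otimes>\<^sub>M iid D d) U" by (simp add: mU)
    show ?thesis unfolding P_def Q_def
      by (rule measurable_Pair[OF measurable_fst measurable_Pair[OF sndV cU]])
  qed
  show ?thesis
  proof (rule measure_eqI)
    show "sets (distr (iid D (k - CARD('d)) \<Otimes>\<^sub>M (VS D CARD('d) \<Otimes>\<^sub>M unif_perm k)) (PiM {..<k} (\<lambda>_. borel)) (concat_perm k CARD('d))) = sets (VS D k)"
      by (simp add: VS_def sI)
    fix A assume "A \<in> sets (distr (iid D (k - CARD('d)) \<Otimes>\<^sub>M (VS D CARD('d) \<Otimes>\<^sub>M unif_perm k)) (PiM {..<k} (\<lambda>_. borel)) (concat_perm k CARD('d)))"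
    hence A: "A \<in> sets N" by (simp add: N_def)
    have mind: "(\<lambda>x. indicator A (\<Phi> x)) \<in> borel_measurable P"
      by (rule measurable_compose[OF mPhi borel_measurable_indicator[OF A]])
    have "emeasure (distr P N \<Phi>) A = (\<integral>\<^sup>+x. indicator A (\<Phi> x) \<partial>P)"
    proof -
      have Ad: "A \<in> sets (distr P N \<Phi>)" using A by simp
      show ?thesis using nn_integral_indicator[OF Ad] nn_integral_distr[OF mPhi borel_measurable_indicator[OF Ad]]
        by simp
    qed
    also have "\<dots> = (\<integral>\<^sup>+S. \<integral>\<^sup>+q. indicator A (\<Phi> (S, q)) \<partial>Q \<partial>iid D m)"
      using Q.nn_integral_fst[OF mind[unfolded P_def]] by (simp add: P_def)
    also have "\<dots> = (\<integral>\<^sup>+S. \<integral>\<^sup>+So. (\<Sum>\<sigma>\<in>Pm. hd So * indicator A (\<Phi> (S, So, \<sigma>)) / K) \<partial>iid D d \<partial>iid D m)"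
    proof (rule nn_integral_cong)
      fix S assume S: "S \<in> space (iid D m)"
      have mS: "(\<lambda>q. indicator A (\<Phi> (S, q))) \<in> borel_measurable Q"
        using measurable_Pair2[OF mind[unfolded P_def] S] .
      have mS2: "(\<lambda>So. indicator A (\<Phi> (S, So, \<sigma>))) \<in> borel_measurable (iid D d)" for \<sigma>
        using measurable_compose[OF mfix[OF S] mind] .
      have "(\<integral>\<^sup>+q. indicator A (\<Phi> (S, q)) \<partial>Q) = (\<integral>\<^sup>+So. \<integral>\<^sup>+\<sigma>. indicator A (\<Phi> (S, So, \<sigma>)) \<partial>U \<partial>VS D d)"
        using U.nn_integral_fst[OF mS[unfolded Q_def]] by (simp add: Q_def)
      also have "\<dots> = (\<integral>\<^sup>+So. (\<Sum>\<sigma>\<in>Pm. indicator A (\<Phi> (S, So, \<sigma>))) / K \<partial>VS D d)"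
        by (simp add: U_eq nn_integral_pmf_of_set[OF nePm finPm] K_def)
      also have "\<dots> = (\<integral>\<^sup>+So. hd So * ((\<Sum>\<sigma>\<in>Pm. indicator A (\<Phi> (S, So, \<sigma>))) / K) \<partial>iid D d)"
        unfolding VSd
        by (rule nn_integral_density[OF mhd])
           (intro borel_measurable_divide_ennreal borel_measurable_sum borel_measurable_const mS2)
      also have "\<dots> = (\<integral>\<^sup>+So. (\<Sum>\<sigma>\<in>Pm. hd So * indicator A (\<Phi> (S, So, \<sigma>)) / K) \<partial>iid D d)"
        by (simp add: ennreal_times_divide sum_distrib_left divide_ennreal_def sum_distrib_right mult.assoc)
      finally show "(\<integral>\<^sup>+q. indicator A (\<Phi> (S, q)) \<partial>Q) = \<dots>" .
    qed
    also have "\<dots> = (\<integral>\<^sup>+z. (\<Sum>\<sigma>\<in>Pm. hd (snd z) * indicator A (\<Phi> (fst z, snd z, \<sigma>)) / K) \<partial>(iid D m \<Otimes>\<^sub>M iid D d))"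
    proof -
      have "(\<lambda>z. \<Sum>\<sigma>\<in>Pm. hd (snd z) * indicator A (\<Phi> (fst z, snd z, \<sigma>)) / K) \<in> borel_measurable (iid D m \<Otimes>\<^sub>M iid D d)"
        by (intro borel_measurable_divide_ennreal borel_measurable_sum borel_measurable_times_ennreal
            borel_measurable_const measurable_compose[OF measurable_snd mhd] measurable_compose[OF mpair mind])
      from Dd.nn_integral_fst[OF this] show ?thesis by simp
    qed
    also have "\<dots> = (\<Sum>\<sigma>\<in>Pm. \<integral>\<^sup>+z. hd (snd z) * indicator A (\<Phi> (fst z, snd z, \<sigma>)) / K \<partial>(iid D m \<Otimes>\<^sub>M iid D d))"
      by (rule nn_integral_sum)
         (intro borel_measurable_divide_ennreal borel_measurable_times_ennreal
            borel_measurable_const measurable_compose[OF measurable_snd mhd] measurable_compose[OF mpair mind])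
    also have "\<dots> = (\<Sum>\<sigma>\<in>Pm. \<integral>\<^sup>+w. H \<sigma> w * indicator A w / K \<partial>iid D k)"
    proof (rule sum.cong[OF refl])
      fix \<sigma> assume \<sigma>: "\<sigma> \<in> Pm"
      hence \<sigma>': "\<sigma> permutes {..<k}" by (simp add: Pm_def)
      let ?Psi = "\<lambda>z. (concat_perm k d (fst z, snd z, \<sigma>) :: nat \<Rightarrow> real^'d)"
      have mPsi: "?Psi \<in> measurable (iid D m \<Otimes>\<^sub>M iid D d) (iid D k)"
        using measurable_compose[OF mpair mPhi, of \<sigma>]
        by (simp add: \<Phi>_def N_def measurable_cong_sets[OF refl sI[of k]])
      have "(\<integral>\<^sup>+z. hd (snd z) * indicator A (\<Phi> (fst z, snd z, \<sigma>)) / K \<partial>(iid D m \<Otimes>\<^sub>M iid D d))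
          = (\<integral>\<^sup>+z. H \<sigma> (?Psi z) * indicator A (?Psi z) / K \<partial>(iid D m \<Otimes>\<^sub>M iid D d))"
      proof (rule nn_integral_cong)
        fix z :: "(nat \<Rightarrow> real^'d) \<times> (nat \<Rightarrow> real^'d)"
        have "FS (Tsig k (k - d) \<sigma>) (concat_perm k d (fst z, snd z, \<sigma>)) = (\<Sum>i<d. outer (snd z i))"
          by (rule FS_concat[OF \<sigma>' dk'])
        hence "H \<sigma> (?Psi z) = hd (snd z)" by (simp add: H_def hd_def m_def FS_def)
        thus "hd (snd z) * indicator A (\<Phi> (fst z, snd z, \<sigma>)) / K = H \<sigma> (?Psi z) * indicator A (?Psi z) / K"
          by (simp add: \<Phi>_def)
      qed
      also have "\<dots> = (\<integral>\<^sup>+w. H \<sigma> w * indicator A w / K \<partial>distr (iid D m \<Otimes>\<^sub>M iid D d) (iid D k) ?Psi)"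
      proof (rule nn_integral_distr[symmetric, OF mPsi])
        have "A \<in> sets (iid D k)" using A by (simp add: N_def sI)
        hence "(\<lambda>w. H \<sigma> w * indicator A w / K) \<in> borel_measurable (iid D k)"
          by (intro borel_measurable_divide_ennreal borel_measurable_times_ennreal mH borel_measurable_indicator borel_measurable_const)
        thus "(\<lambda>w. H \<sigma> w * indicator A w / K) \<in> borel_measurable (distr (iid D m \<Otimes>\<^sub>M iid D d) (iid D k) ?Psi)"
          by (simp only: measurable_cong_sets[OF sets_distr refl])
      qed
      also have "distr (iid D m \<Otimes>\<^sub>M iid D d) (iid D k) ?Psi = iid D k"
        unfolding m_def by (rule distr_Psi[OF D dk' \<sigma>'])
      finally show "(\<integral>\<^sup>+z. hd (snd z) * indicator A (\<Phi> (fst z, snd z, \<sigma>)) / K \<partial>(iid D m \<Otimes>\<^sub>M iid D d))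
          = (\<integral>\<^sup>+w. H \<sigma> w * indicator A w / K \<partial>iid D k)" .
    qed
    also have "\<dots> = (\<integral>\<^sup>+w. (\<Sum>\<sigma>\<in>Pm. H \<sigma> w * indicator A w / K) \<partial>iid D k)"
    proof -
      have "A \<in> sets (iid D k)" using A by (simp add: N_def sI)
      thus ?thesis by (intro nn_integral_sum[symmetric] borel_measurable_divide_ennreal borel_measurable_times_ennreal mH borel_measurable_indicator borel_measurable_const)
    qed
    also have "\<dots> = (\<integral>\<^sup>+w. hk w * indicator A w \<partial>iid D k)"
    proof (rule nn_integral_cong)
      fix w :: "nat \<Rightarrow> real^'d"
      have nn: "\<And>\<sigma>. \<sigma> \<in> Pm \<Longrightarrow> 0 \<le> det (FS (Tsig k m \<sigma>) w)"
      proof -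
        fix \<sigma> assume "\<sigma> \<in> Pm"
        hence \<sigma>: "\<sigma> permutes {..<k}" by (simp add: Pm_def)
        have "finite (Tsig k m \<sigma>)" by (rule finite_subset[OF Tsig_card(1)[OF \<sigma>]]) (auto simp: m_def)
        moreover have "card (Tsig k m \<sigma>) = CARD('d)" using Tsig_card(2)[OF \<sigma>, of m] dk' by (simp add: m_def d_def)
        ultimately show "0 \<le> det (FS (Tsig k m \<sigma>) w)" by (rule det_FS_nonneg)
      qed
      have "(\<Sum>\<sigma>\<in>Pm. H \<sigma> w) = ennreal ((\<Sum>\<sigma>\<in>Pm. det (FS (Tsig k m \<sigma>) w)) / c)"
        unfolding H_def by (rule ennreal_sum_div) (rule nn)
      also have "(\<Sum>\<sigma>\<in>Pm. det (FS (Tsig k m \<sigma>) w)) = fact k / real (k choose d) * det (FS {..<k} w)"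
        using sum_perm_det[OF dk, of w] by (simp add: Pm_def m_def d_def)
      finally have sH: "(\<Sum>\<sigma>\<in>Pm. H \<sigma> w) = ennreal (fact k / real (k choose d) * det (FS {..<k} w) / c)" .
      have "(\<Sum>\<sigma>\<in>Pm. H \<sigma> w) / K = hk w"
      proof -
        have K: "K = ennreal (fact k)" by (simp add: K_def cardPm ennreal_of_nat_eq_real_of_nat of_nat_fact)
        have "(\<Sum>\<sigma>\<in>Pm. H \<sigma> w) / K = ennreal (fact k / real (k choose d) * det (FS {..<k} w) / c / fact k)"
          unfolding sH K by (rule ennreal_div_pos) simp
        also have "fact k / real (k choose d) * det (FS {..<k} w) / c / fact k = det (FS {..<k} w) / ck"
          by (simp add: c_def ck_def)
        finally show ?thesis by (simp add: hk_def)
      qed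
      moreover have "(\<Sum>\<sigma>\<in>Pm. H \<sigma> w * indicator A w / K) = (\<Sum>\<sigma>\<in>Pm. H \<sigma> w) / K * indicator A w"
        by (simp add: divide_ennreal_def sum_distrib_right sum_distrib_left ac_simps)
      ultimately show "(\<Sum>\<sigma>\<in>Pm. H \<sigma> w * indicator A w / K) = hk w * indicator A w" by simp
    qed
    also have "\<dots> = emeasure (VS D k) A"
    proof -
      have "A \<in> sets (iid D k)" using A by (simp add: N_def sI)
      thus ?thesis unfolding VSk by (rule emeasure_density[OF mhk, symmetric])
    qed
    finally show "emeasure (distr (iid D (k - CARD('d)) \<Otimes>\<^sub>M (VS D CARD('d) \<Otimes>\<^sub>M unif_perm k)) (PiM {..<k} (\<lambda>_. borel)) (concat_perm k CARD('d))) A = emeasure (VS D k) A"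
      by (simp add: P_def Q_def U_def N_def \<Phi>_def m_def d_def)
  qed
qed

end
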